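(* Let $f_0(i)=i$ for all $i\ge1$. Then for $1\le k\le n$, \[c_1(n,k)=\binom{n+k-1}{2k-1},\] and for every $m\ge1$, \[c_m(n,k)=\sum_{i=k}^n(m-1)^{i-k}\binom{i-1}{k-1}\binom{n+i-1}{2i-1}.\]
   Context: For $m\ge 1$, $f_m$ is the invert transform of $f_{m-1}$, i.e. $f_m(n)=f_{m-1}(n)+\sum_{i=1}^{n-1}f_{m-1}(i)f_m(n-i)$ for $n\ge1$. For $m\ge1$ the numbers $c_m(n,k)$, $0\le k\le n$, are defined by $c_m(0,0)=1$, $c_m(n,0)=0$ for $n\ge1$, and $c_m(n,k)=\sum_{i=1}^{n-k+1}f_{m-1}(i)\,c_m(n-i,k-1)$ for $1\le k\le n$. The convention $0^0=1$ is used. *)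

theory Defs
  imports Main
begin

text \<open>Invert transform of a sequence a (indexed from 1; the value at 0 is irrelevant
  and set to 0): b(n) = a(n) + sum_{i=1}^{n-1} a(i) b(n-i) for n >= 1.\<close>
function invert :: "(nat \<Rightarrow> nat) \<Rightarrow> nat \<Rightarrow> nat" where
  "invert a n = (if n = 0 then 0
                 else a n + (\<Sum>i\<in>{1..<n}. a i * invert a (n - i)))"
  by auto
termination by (relation "measure (\<lambda>(a, n). n)") auto

declare invert.simps [simp del]

definition fseq :: "(nat \<Rightarrow> nat) \<Rightarrow> nat \<Rightarrow> nat \<Rightarrow> nat" where
  "fseq f0 m = (invert ^^ m) f0"

text \<open>c(n,k) built from a base sequence g (for c_m, g = f_{m-1}):
  c(0,0)=1, c(n,0)=0 for n>=1, c(n,k)=sum_{i=1}^{n-k+1} g(i) c(n-i,k-1) for 1<=k<=n.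
  Values for k > n are not used (set to 0).\<close>
function cseq :: "(nat \<Rightarrow> nat) \<Rightarrow> nat \<Rightarrow> nat \<Rightarrow> nat" where
  "cseq g n k = (if k = 0 then (if n = 0 then 1 else 0)
                 else if n < k then 0
                 else (\<Sum>i\<in>{1..n - k + 1}. g i * cseq g (n - i) (k - 1)))"
  by auto
termination by (relation "measure (\<lambda>(g, n, k). k)") auto

declare cseq.simps [simp del]

definition c :: "(nat \<Rightarrow> nat) \<Rightarrow> nat \<Rightarrow> nat \<Rightarrow> nat \<Rightarrow> nat" where
  "c f0 m n k = cseq (fseq f0 (m - 1)) n k"

end

theory Submission
  imports Defs "HOL-Computational_Algebra.Formal_Power_Series"
begin

unbundle fps_syntax

definition fpsof :: "(nat \<Rightarrow> nat) \<Rightarrow> rat fps" where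
  "fpsof a = Abs_fps (\<lambda>n. if n = 0 then 0 else of_nat (a n))"

lemma fpsof_nth: "fpsof a $ n = (if n = 0 then 0 else of_nat (a n))"
  by (simp add: fpsof_def)

lemma pow_low:
  assumes "G $ 0 = (0::rat)"
  shows "n < k \<Longrightarrow> (G ^ k) $ n = 0"
proof (induction k arbitrary: n)
  case 0 then show ?case by simp
next
  case (Suc k)
  have "(G ^ Suc k) $ n = (\<Sum>i=0..n. G$i * (G^k)$(n-i))"
    by (simp add: fps_mult_nth)
  also have "\<dots> = 0"
  proof (rule sum.neutral, intro ballI)
    fix i assume "i \<in> {0..n}"
    show "G$i * (G^k)$(n-i) = 0"
    proof (cases "i = 0")
      case True then show ?thesis using assms by simp
    next
      case False
      moreover have "i \<le> n" using \<open>i \<in> {0..n}\<close> by simp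
      ultimately have "n - i < k" using Suc.prems by arith
      then show ?thesis using Suc.IH by simp
    qed
  qed
  finally show ?case .
qed

lemma invert_eq:
  "fpsof (invert a) = fpsof a + fpsof a * fpsof (invert a)"
proof (rule fps_ext)
  fix n
  show "fpsof (invert a) $ n = (fpsof a + fpsof a * fpsof (invert a)) $ n"
  proof (cases "n = 0")
    case True then show ?thesis by (simp add: fpsof_nth fps_mult_nth invert.simps)
  next
    case False
    have "(fpsof a * fpsof (invert a)) $ n = (\<Sum>i=0..n. fpsof a $ i * fpsof (invert a) $ (n-i))"
      by (simp add: fps_mult_nth)
    also have "\<dots> = (\<Sum>i\<in>{1..<n}. fpsof a $ i * fpsof (invert a) $ (n-i))"
      by (rule sum.mono_neutral_right) (auto simp: fpsof_nth)
    also have "\<dots> = (\<Sum>i\<in>{1..<n}. of_nat (a i * invert a (n - i)))"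
      by (rule sum.cong) (auto simp: fpsof_nth)
    finally show ?thesis using False
      by (subst (1) fpsof_nth) (simp add: fpsof_nth invert.simps[of a n])
  qed
qed

definition F0 :: "rat fps" where "F0 = Abs_fps (\<lambda>n. of_nat n)"

lemma fseq_rel:
  assumes "\<And>i. i \<ge> 1 \<Longrightarrow> f0 i = i"
  shows "fpsof (fseq f0 m) * (1 - of_nat m * F0) = F0"
proof (induction m)
  case 0
  have "fpsof f0 = F0"
    by (rule fps_ext) (auto simp: fpsof_nth F0_def assms)
  then show ?case by (simp add: fseq_def)
next
  case (Suc m)
  define G where "G = fpsof (fseq f0 m)"
  define G' where "G' = fpsof (fseq f0 (Suc m))"
  have G': "G' = G + G * G'"
    unfolding G_def G'_def fseq_def funpow.simps o_apply by (rule invert_eq)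
  have "G' * (1 - G) = G" using G' by (simp add: algebra_simps)
  then have "G' * (1 - G) * (1 - of_nat m * F0) = F0"
    using Suc G_def by simp
  then have "G' * (1 - of_nat m * F0) - G' * (G * (1 - of_nat m * F0)) = F0"
    by (simp add: algebra_simps)
  then have "G' * (1 - of_nat m * F0) - G' * F0 = F0"
    using Suc G_def by simp
  then show ?case unfolding G'_def[symmetric] by (simp add: algebra_simps)
qed

lemma cseq_fps: "of_nat (cseq g n k) = (fpsof g ^ k) $ n"
proof (induction k arbitrary: n)
  case 0 then show ?case by (simp add: cseq.simps)
next
  case (Suc k)
  have z: "fpsof g $ 0 = 0" by (simp add: fpsof_nth)
  show ?case
  proof (cases "n < Suc k")
    case True
    then show ?thesis using pow_low[OF z True] by (simp add: cseq.simps)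
  next
    case False
    have "(fpsof g ^ Suc k) $ n = (\<Sum>i=0..n. fpsof g $ i * (fpsof g ^ k) $ (n-i))"
      by (simp add: fps_mult_nth)
    also have "\<dots> = (\<Sum>i\<in>{1..n - Suc k + 1}. fpsof g $ i * (fpsof g ^ k) $ (n-i))"
      by (rule sum.mono_neutral_right) (use False in \<open>auto simp: fpsof_nth intro!: pow_low[OF z]\<close>)
    also have "\<dots> = (\<Sum>i\<in>{1..n - Suc k + 1}. of_nat (g i * cseq g (n - i) k))"
      by (rule sum.cong) (auto simp: fpsof_nth Suc)
    finally show ?thesis using False
      by (subst cseq.simps) simp
  qed
qed

definition P :: "rat \<Rightarrow> rat fps" where "P q = Abs_fps (\<lambda>n. q ^ n)"

lemma P_pow: "(P q ^ Suc k) $ n = of_nat ((n + k) choose n) * q ^ n"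
proof (induction k arbitrary: n)
  case 0 then show ?case by (simp add: P_def)
next
  case (Suc k)
  have "(P q ^ Suc (Suc k)) $ n = (P q ^ Suc k * P q) $ n"
    by (simp add: power_Suc2 del: power_Suc)
  also have "\<dots> = (\<Sum>i=0..n. of_nat ((i + k) choose i) * q ^ i * q ^ (n - i))"
    by (simp only: fps_mult_nth Suc.IH) (simp add: P_def)
  also have "\<dots> = (\<Sum>i=0..n. of_nat ((k + i) choose i) * q ^ n)"
    by (rule sum.cong) (auto simp: mult.assoc power_add[symmetric] add.commute)
  also have "\<dots> = of_nat (\<Sum>i\<le>n. (k + i) choose i) * q ^ n"
    by (simp add: sum_distrib_right atMost_atLeast0)
  also have "\<dots> = of_nat ((n + Suc k) choose n) * q ^ n"
    by (subst sum_choose_lower) (simp add: add.commute)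
  finally show ?case .
qed

lemma P_inv: "P q * (1 - fps_const q * fps_X) = 1"
proof (rule fps_ext)
  fix n
  show "(P q * (1 - fps_const q * fps_X)) $ n = (1::rat fps) $ n"
    by (cases n) (simp_all add: algebra_simps fps_X_power_mult_right_nth[where k=1, simplified] P_def)
qed

lemma F0_eq: "F0 = fps_X * P 1 ^ 2"
proof (rule fps_ext)
  fix n
  have "(P 1 ^ Suc 1) $ (n - 1) = of_nat n" if "n \<ge> 1"
    using that binomial_symmetric[of "n-1" n] by (subst P_pow) simp
  then show "F0 $ n = (fps_X * P 1 ^ 2) $ n"
    using fps_X_power_mult_nth[where k=1, of "P 1 ^ 2" n]
    by (auto simp: F0_def numeral_2_eq_2)
qed

lemma F0_pow:
  assumes "i \<ge> 1"
  shows "(F0 ^ i) $ n = of_nat ((n + i - 1) choose (2 * i - 1))"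
proof -
  have "F0 ^ i = fps_X ^ i * P 1 ^ Suc (2 * i - 1)"
    using assms by (simp add: F0_eq power_mult_distrib power_mult[symmetric] mult.commute)
  then have e: "(F0 ^ i) $ n = (if n < i then 0 else of_nat ((n - i + (2*i - 1)) choose (n - i)))"
    by (simp add: fps_X_power_mult_nth P_pow del: power_Suc)
  show ?thesis
  proof (cases "n < i")
    case True then show ?thesis using e by simp
  next
    case False
    have "(n - i + (2*i - 1)) = n + i - 1" using False assms by simp
    moreover have "(n + i - 1) choose (n - i) = (n + i - 1) choose (2 * i - 1)"
      using False assms by (subst binomial_symmetric) (auto simp: diff_le_mono)
    ultimately show ?thesis using e False by simp
  qed
qed

lemma main:
  assumes f0: "\<And>i. i \<ge> 1 \<Longrightarrow> f0 i = i" and m: "m \<ge> 1" and k: "1 \<le> k"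
  shows "c f0 m n k = (\<Sum>i = k..n. (m - 1) ^ (i - k) * ((i - 1) choose (k - 1)) * ((n + i - 1) choose (2 * i - 1)))"
proof -
  define cc :: rat where "cc = of_nat (m - 1)"
  define G where "G = fpsof (fseq f0 (m - 1))"
  define H where "H = fps_X * P cc"
  have F00: "F0 $ 0 = 0" by (simp add: F0_def)
  have G1: "G * (1 - fps_const cc * F0) = F0"
    using fseq_rel[OF f0, of "m - 1"] by (simp add: G_def cc_def fps_of_nat)
  have "H * (1 - fps_const cc * fps_X) = fps_X"
    unfolding H_def using P_inv[of cc] by (simp add: mult.assoc)
  then have "(H * (1 - fps_const cc * fps_X)) oo F0 = F0"
    using F00 by simp
  then have H1: "(H oo F0) * (1 - fps_const cc * F0) = F0"
    using F00 by (simp add: fps_compose_mult_distrib fps_compose_sub_distrib)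
  have nz: "1 - fps_const cc * F0 \<noteq> 0"
  proof
    assume "1 - fps_const cc * F0 = 0"
    then have "(1 - fps_const cc * F0) $ 0 = 0" by simp
    then show False using F00 by simp
  qed
  have GH: "G = H oo F0"
    using G1 H1 nz by (metis mult_right_cancel)
  have Hk: "(H ^ k) $ i = (if i < k then 0 else of_nat (((i - 1) choose (k - 1)) * (m - 1) ^ (i - k)))" for i
  proof -
    have "H ^ k = fps_X ^ k * P cc ^ Suc (k - 1)"
      using k by (simp add: H_def power_mult_distrib)
    then have "(H ^ k) $ i = (if i < k then 0 else of_nat ((i - k + (k - 1)) choose (i - k)) * cc ^ (i - k))"
      by (simp add: fps_X_power_mult_nth P_pow del: power_Suc)
    moreover have "i \<ge> k \<Longrightarrow> (i - k + (k - 1)) choose (i - k) = (i - 1) choose (k - 1)"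
      using k by (subst binomial_symmetric) (auto simp: diff_le_mono)
    ultimately show ?thesis by (simp add: cc_def)
  qed
  have "of_nat (c f0 m n k) = (G ^ k) $ n"
    unfolding c_def G_def by (rule cseq_fps)
  also have "\<dots> = (H ^ k oo F0) $ n"
    using GH F00 by (simp add: fps_compose_power)
  also have "\<dots> = (\<Sum>i=0..n. (H^k) $ i * (F0 ^ i) $ n)"
    by (simp add: fps_compose_nth)
  also have "\<dots> = (\<Sum>i=k..n. (H^k) $ i * (F0 ^ i) $ n)"
    by (rule sum.mono_neutral_right) (auto simp: Hk)
  also have "\<dots> = (\<Sum>i=k..n. of_nat ((m - 1) ^ (i - k) * ((i - 1) choose (k - 1)) * ((n + i - 1) choose (2 * i - 1))))"
    by (rule sum.cong) (use k in \<open>auto simp: Hk F0_pow\<close>)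
  finally show ?thesis by (simp only: of_nat_sum[symmetric] of_nat_eq_iff)
qed

theorem corollary26:
  fixes f0 :: "nat \<Rightarrow> nat"
  assumes "\<And>i. i \<ge> 1 \<Longrightarrow> f0 i = i"
  shows "(\<forall>n k. 1 \<le> k \<and> k \<le> n \<longrightarrow> c f0 1 n k = (n + k - 1) choose (2 * k - 1)) \<and>
         (\<forall>m n k. m \<ge> 1 \<and> 1 \<le> k \<and> k \<le> n \<longrightarrow>
           c f0 m n k = (\<Sum>i = k..n. (m - 1) ^ (i - k) * ((i - 1) choose (k - 1)) * ((n + i - 1) choose (2 * i - 1))))"
proof (intro conjI allI impI)
  fix m n k :: nat assume h: "m \<ge> 1 \<and> 1 \<le> k \<and> k \<le> n"
  then show "c f0 m n k = (\<Sum>i = k..n. (m - 1) ^ (i - k) * ((i - 1) choose (k - 1)) * ((n + i - 1) choose (2 * i - 1)))"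
    using main[OF assms] by blast
next
  fix n k :: nat assume h: "1 \<le> k \<and> k \<le> n"
  have "c f0 1 n k = (\<Sum>i = k..n. (1 - 1) ^ (i - k) * ((i - 1) choose (k - 1)) * ((n + i - 1) choose (2 * i - 1)))"
    using main[OF assms, of 1 k n] h by simp
  also have "\<dots> = (\<Sum>i \<in> {k}. (1 - 1) ^ (i - k) * ((i - 1) choose (k - 1)) * ((n + i - 1) choose (2 * i - 1)))"
    by (rule sum.mono_neutral_right) (use h in auto)
  finally show "c f0 1 n k = (n + k - 1) choose (2 * k - 1)" by simp
qed

end
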